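(* Let $Z=(Y,A,X)\sim\mathbb{P}$ and let $\widehat{\mu}=(\widehat\mu_1,\dots,\widehat\mu_p)^\top$ be an estimator of $\mu$ constructed from a separate sample independent of $Z_1,\dots,Z_n$. Let $\widehat{C}\in\arg\min_{C\in\mathcal{C}_k}\widehat{R}_n(C)$, where $\widehat{R}_n(C)=\frac{1}{n}\sum_{i=1}^n\|\widehat\mu(X_i)-\Pi_C(\widehat\mu(X_i))\|_2^2$, and let $C^*\in\mathcal{C}_k^*$. Suppose $\mathbb{P}$ satisfies the margin condition with some radius $\kappa>0$ and rate $\alpha>0$, and that: (A1) $\|\mu_a\|_\infty,\|\widehat\mu_a\|_\infty\le B<\infty$ almost surely for all $a\in\mathcal{A}$; (A2) $\max_a\|\widehat\mu_a-\mu_a\|_\infty=o_{\mathbb{P}}(1)$. Let $$R_{1,n}=\max_a\|\widehat\mu_a-\mu_a\|_{\mathbb{P},1}+\max_a\|\widehat\mu_a-\mu_a\|_\infty^{\alpha+1}+\frac{1}{\kappa}\max_a\big(\|\widehat\mu_a-\mu_a\|_\infty\|\widehat\mu_a-\mu_a\|_{\mathbb{P},1}\big).$$ Then $$\mathbb{P}\{R(\widehat C)-R(C^* )\}=O\Big(\frac{1}{\sqrt n}+R_{1,n}\Big)\quad\text{and}\quad R(\widehat C)-R(C^* )=O_{\mathbb{P}}\Big(\sqrt{\frac{\log n}{n}}+R_{1,n}\Big).$$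
   Context: Observed data: i.i.d. $Z_1,\dots,Z_n$ copies of $Z=(Y,A,X)\sim\mathbb{P}$, with outcome $Y\in\mathbb{R}$, treatment $A\in\mathcal{A}=\{1,\dots,p\}$, covariates $X\in\mathcal{X}\subseteq\mathbb{R}^d$. For $a\in\mathcal{A}$, $\mu_a(X)=\mathbb{E}(Y\mid X,A=a)$ and $\mu=\mu(X)=(\mu_1(X),\dots,\mu_p(X))^\top$. (Standing identification assumptions: consistency $Y=Y^a$ if $A=a$, no unmeasured confounding $A\perp Y^a\mid X$, and positivity $\mathbb{P}(A=a\mid X)$ bounded away from $0$.) A codebook is a set $C=\{c_1,\dots,c_k\}$ of $k$ points in $\mathbb{R}^p$; $\mathcal{C}_k$ is the set of all codebooks of size $k$ in the image of $\mu$. $\Pi_C(x)=\arg\min_{c\in C}\|c-x\|_2^2$. The population clustering risk is $R(C)=\mathbb{E}\|\mu-\Pi_C(\mu)\|_2^2$, and $\mathcal{C}_k^*$ is the set of minimizers of $R$ over $\mathcal{C}_k$. For $C^*\in\mathcal{C}^*_k$, the Voronoi cell is $V_j(C^* )=\{x:\|x-c_j^*\|_2\le\|x-c_i^*\|_2\ \forall i\ne j\}$, and for $t>0$, $N_{C^*}(t)=\bigcup_j\{x\in V_j(C^* ):|\,\|x-c_j^*\|_2-\min_{i\ne j}\|x-c_i^*\|_2\,|\le t\}$. Margin condition with radius $\kappa>0$ and rate $\alpha>0$: for all $0\le t\le\kappa$, $\sup_{C^*\in\mathcal{C}_k^*}\mathbb{P}(\mu\in N_{C^*}(t))\lesssim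 t^\alpha$. Notation: $\|f\|_{\mathbb{P},q}=(\int|f|^q\,d\mathbb{P})^{1/q}$, $\|f\|_\infty$ the sup norm; $\mathbb{P}(\hat f)=\int\hat f(z)\,d\mathbb{P}(z)$ denotes expectation with any sample-dependent quantities in $\hat f$ held fixed (so, e.g., it is conditional on the sample used to build $\widehat\mu$); $a_n\lesssim b_n$ means $a_n\le \mathsf{c}\,b_n$ for a constant $\mathsf{c}>0$. *)

theory Defs
  imports "HOL-Probability.Probability"
begin

definition proj :: "('a::real_normed_vector) set \<Rightarrow> 'a \<Rightarrow> 'a" where
  "proj C y = (SOME c. c \<in> C \<and> (\<forall>c'\<in>C. (norm (c - y))^2 \<le> (norm (c' - y))^2))"

definition codebooks :: "('x \<Rightarrow> 'a) \<Rightarrow> 'x set \<Rightarrow> nat \<Rightarrow> 'a set set" where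
  "codebooks mu X k = {C. C \<subseteq> mu ` X \<and> finite C \<and> card C = k}"

definition clust_risk :: "'x measure \<Rightarrow> ('x \<Rightarrow> 'a::real_normed_vector) \<Rightarrow> 'a set \<Rightarrow> real" where
  "clust_risk P mu C = (\<integral>x. (norm (mu x - proj C (mu x)))^2 \<partial>P)"

definition optimal_codebooks ::
  "'x measure \<Rightarrow> ('x \<Rightarrow> 'a::real_normed_vector) \<Rightarrow> 'x set \<Rightarrow> nat \<Rightarrow> 'a set set" where
  "optimal_codebooks P mu X k =
     {C \<in> codebooks mu X k. \<forall>C'\<in>codebooks mu X k. clust_risk P mu C \<le> clust_risk P mu C'}"

definition emp_risk :: "nat \<Rightarrow> ('x \<Rightarrow> 'a::real_normed_vector) \<Rightarrow> (nat \<Rightarrow> 'x) \<Rightarrow> 'a set \<Rightarrow> real" where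
  "emp_risk n muh xs C = (1 / real n) * (\<Sum>i<n. (norm (muh (xs i) - proj C (muh (xs i))))^2)"

definition voronoi :: "('a::metric_space) set \<Rightarrow> 'a \<Rightarrow> 'a set" where
  "voronoi C c = {x. \<forall>c'\<in>C - {c}. dist x c \<le> dist x c'}"

text \<open>N_C(t). The minimum over the empty set (k = 1) is +infinity, so that case
  contributes nothing; this is encoded by the guard C - {c} \<noteq> {}.\<close>
definition margin_nbhd :: "('a::metric_space) set \<Rightarrow> real \<Rightarrow> 'a set" where
  "margin_nbhd C t = (\<Union>c\<in>C. {x \<in> voronoi C c. C - {c} \<noteq> {} \<and>
       \<bar>dist x c - Min ((\<lambda>c'. dist x c') ` (C - {c}))\<bar> \<le> t})"

definition margin_condition ::
  "'x measure \<Rightarrow> ('x \<Rightarrow> 'a::real_normed_vector) \<Rightarrow> 'x set \<Rightarrow> nat \<Rightarrow> real \<Rightarrow> real \<Rightarrow> bool" where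
  "margin_condition P mu X k \<kappa> \<alpha> \<longleftrightarrow> \<kappa> > 0 \<and> \<alpha> > 0 \<and>
     (\<exists>c>0. \<forall>t. 0 \<le> t \<and> t \<le> \<kappa> \<longrightarrow>
        (\<forall>Cs\<in>optimal_codebooks P mu X k.
            measure P {x \<in> space P. mu x \<in> margin_nbhd Cs t} \<le> c * t powr \<alpha>))"

definition supnorm :: "'x set \<Rightarrow> ('x \<Rightarrow> real) \<Rightarrow> real" where
  "supnorm X f = (SUP x\<in>X. \<bar>f x\<bar>)"

definition L1norm :: "'x measure \<Rightarrow> ('x \<Rightarrow> real) \<Rightarrow> real" where
  "L1norm P f = (\<integral>x. \<bar>f x\<bar> \<partial>P)"

definition rem_R1 :: "'x measure \<Rightarrow> 'x set \<Rightarrow> ('x \<Rightarrow> real^'p) \<Rightarrow> ('x \<Rightarrow> real^'p)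
    \<Rightarrow> real \<Rightarrow> real \<Rightarrow> real" where
  "rem_R1 P X mu muh \<kappa> \<alpha> =
     (MAX a. L1norm P (\<lambda>x. muh x $ a - mu x $ a))
     + (MAX a. supnorm X (\<lambda>x. muh x $ a - mu x $ a)) powr (\<alpha> + 1)
     + (1 / \<kappa>) * (MAX a. supnorm X (\<lambda>x. muh x $ a - mu x $ a)
                          * L1norm P (\<lambda>x. muh x $ a - mu x $ a))"

end

theory Submission
  imports Defs
begin

lemma maxineq:
  fixes P :: "'x measure" and I :: "'i set" and g :: "'i \<Rightarrow> 'x \<Rightarrow> real"
  assumes P: "prob_space P" and fin: "finite I" and ne: "I \<noteq> {}" and n: "n > 0" and b: "b > 0"
    and gm: "\<And>i. i \<in> I \<Longrightarrow> g i \<in> borel_measurable P"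
    and gb: "\<And>i x. i \<in> I \<Longrightarrow> x \<in> space P \<Longrightarrow> \<bar>g i x\<bar> \<le> b"
  shows "integrable (PiM {..<n} (\<lambda>_. P))
           (\<lambda>xs. MAX i\<in>I. (1/real n) * (\<Sum>t<n. (\<integral>y. g i y \<partial>P) - g i (xs t)))"
    and "(\<integral>xs. (MAX i\<in>I. (1/real n) * (\<Sum>t<n. (\<integral>y. g i y \<partial>P) - g i (xs t))) \<partial>PiM {..<n} (\<lambda>_. P))
           \<le> b * (ln (card I) + 1) / sqrt n"
proof -
  interpret P: prob_space P by fact
  define Pn where "Pn = PiM {..<n} (\<lambda>_. P)"
  interpret Pn: prob_space Pn unfolding Pn_def by (intro prob_space_PiM) (simp add: P)
  interpret PS: product_sigma_finite "\<lambda>_::nat. P"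
    by (simp add: product_sigma_finite_def P.sigma_finite_measure_axioms)
  define E where "E i = (\<integral>y. g i y \<partial>P)" for i
  define Z where "Z i xs = (1/real n) * (\<Sum>t<n. E i - g i (xs t))" for i xs
  have Eb: "\<bar>E i\<bar> \<le> b" if "i \<in> I" for i
  proof -
    have "\<bar>E i\<bar> \<le> (\<integral>y. \<bar>g i y\<bar> \<partial>P)" unfolding E_def by (rule integral_abs_bound)
    also have "\<dots> \<le> (\<integral>y. b \<partial>P)"
      by (intro integral_mono P.integrable_const_bound[where B=b] AE_I2) (use gb gm that b in auto)
    finally show ?thesis by (simp add: P.prob_space)
  qed
  have Zm: "Z i \<in> borel_measurable Pn" if "i \<in> I" for i
    unfolding Z_def Pn_def using gm[OF that] by measurable
  have Zb: "\<bar>Z i xs\<bar> \<le> 2 * b" if "i \<in> I" "xs \<in> space Pn" for i xs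
  proof -
    have xs: "xs t \<in> space P" if "t < n" for t
      using \<open>xs \<in> space Pn\<close> that unfolding Pn_def by (auto simp: space_PiM PiE_iff)
    have "\<bar>\<Sum>t<n. E i - g i (xs t)\<bar> \<le> (\<Sum>t<n. \<bar>E i - g i (xs t)\<bar>)" by (rule sum_abs)
    also have "\<dots> \<le> (\<Sum>t<n. 2 * b)"
    proof (intro sum_mono)
      fix t assume "t \<in> {..<n}"
      then show "\<bar>E i - g i (xs t)\<bar> \<le> 2 * b"
        using Eb[OF \<open>i \<in> I\<close>] gb[OF \<open>i \<in> I\<close> xs[of t]] by (simp add: abs_le_iff)
    qed
    finally show ?thesis using n unfolding Z_def by (simp add: abs_mult field_simps)
  qed
  define M where "M xs = (MAX i\<in>I. Z i xs)" for xs
  have Mm: "M \<in> borel_measurable Pn"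
    unfolding M_def using Zm fin by (intro borel_measurable_Max) auto
  have Mb: "\<bar>M xs\<bar> \<le> 2 * b" if "xs \<in> space Pn" for xs
  proof -
    obtain i where "i \<in> I" "M xs = Z i xs"
    proof -
      have "M xs \<in> (\<lambda>i. Z i xs) ` I" unfolding M_def using fin ne by (intro Max_in) auto
      thus ?thesis using that by blast
    qed
    thus ?thesis using Zb that by auto
  qed
  have Mi: "integrable Pn M"
    by (intro Pn.integrable_const_bound[where B="2*b"] AE_I2 Mm) (use Mb in auto)
  show "integrable (PiM {..<n} (\<lambda>_. P))
           (\<lambda>xs. MAX i\<in>I. (1/real n) * (\<Sum>t<n. (\<integral>y. g i y \<partial>P) - g i (xs t)))"
    using Mi unfolding M_def Z_def E_def Pn_def .
  define lam where "lam = sqrt n / b"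
  have lam: "lam > 0" unfolding lam_def using n b by auto
  define l where "l = lam / n"
  have l: "l > 0" unfolding l_def using lam n by auto
  have mgf: "(\<integral>xs. exp (lam * Z i xs) \<partial>Pn) \<le> exp (1/2)" if i: "i \<in> I" for i
  proof -
    interpret G: interval_bounded_random_variable P "\<lambda>y. - g i y" "-b" b
      by unfold_locales (use gm[OF i] gb[OF i] in \<open>auto simp: abs_le_iff intro!: AE_I2\<close>)
    have eq: "ennreal (exp (lam * Z i xs)) = (\<Prod>t\<in>{..<n}. ennreal (exp (l * (- g i (xs t) - (\<integral>y. - g i y \<partial>P)))))"
      for xs
      unfolding Z_def E_def l_def
      by (simp add: prod_ennreal exp_sum[symmetric] sum_distrib_left field_simps Bochner_Integration.integral_minus)
    have "(\<integral>\<^sup>+xs. ennreal (exp (lam * Z i xs)) \<partial>Pn) =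
          (\<Prod>t\<in>{..<n}. \<integral>\<^sup>+y. ennreal (exp (l * (- g i y - (\<integral>y. - g i y \<partial>P)))) \<partial>P)"
      unfolding eq Pn_def
      by (rule PS.product_nn_integral_prod) (use gm[OF i] in auto)
    also have "\<dots> \<le> (\<Prod>t\<in>{..<n}. ennreal (exp (l\<^sup>2 * (b - - b)\<^sup>2 / 8)))"
      by (intro prod_mono_ennreal G.Hoeffdings_lemma_nn_integral l)
    also have "\<dots> = ennreal (exp (l\<^sup>2 * (b - - b)\<^sup>2 / 8) ^ n)"
      by (simp add: prod_ennreal ennreal_power)
    also have "exp (l\<^sup>2 * (b - - b)\<^sup>2 / 8) ^ n = exp (1/2)"
      using n b unfolding l_def lam_def
      by (simp add: exp_of_nat_mult[symmetric] power2_eq_square field_simps)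
    finally have le: "(\<integral>\<^sup>+xs. ennreal (exp (lam * Z i xs)) \<partial>Pn) \<le> ennreal (exp (1/2))" .
    have "(\<integral>\<^sup>+xs. ennreal (exp (lam * Z i xs)) \<partial>Pn) = ennreal (\<integral>xs. exp (lam * Z i xs) \<partial>Pn)"
      by (intro nn_integral_eq_integral Pn.integrable_const_bound[where B="exp (lam * (2*b))"] AE_I2)
         (use Zm[OF i] Zb[OF i] lam in \<open>auto simp: abs_le_iff\<close>)
    with le show ?thesis by simp
  qed
  have expi: "integrable Pn (\<lambda>xs. exp (lam * M xs))"
    by (intro Pn.integrable_const_bound[where B="exp (lam * (2*b))"] AE_I2)
       (use Mm Mb lam in \<open>auto simp: abs_le_iff\<close>)
  have "exp (lam * (\<integral>xs. M xs \<partial>Pn)) \<le> (\<integral>xs. exp (lam * M xs) \<partial>Pn)"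
    by (rule Pn.jensens_inequality[where I=UNIV]) (use Mi expi lam in \<open>auto intro!: convex_on_exp\<close>)
  also have "\<dots> \<le> (\<integral>xs. (\<Sum>i\<in>I. exp (lam * Z i xs)) \<partial>Pn)"
  proof (intro integral_mono expi)
    show "integrable Pn (\<lambda>xs. \<Sum>i\<in>I. exp (lam * Z i xs))"
      by (intro Bochner_Integration.integrable_sum Pn.integrable_const_bound[where B="exp (lam * (2*b))"] AE_I2)
         (use Zm Zb lam in \<open>auto simp: abs_le_iff\<close>)
    fix xs
    obtain i where "i \<in> I" "M xs = Z i xs"
    proof -
      have "M xs \<in> (\<lambda>i. Z i xs) ` I" unfolding M_def using fin ne by (intro Max_in) auto
      thus ?thesis using that by blast
    qed
    thus "exp (lam * M xs) \<le> (\<Sum>i\<in>I. exp (lam * Z i xs))"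
      using fin by (auto intro!: member_le_sum)
  qed
  also have "\<dots> = (\<Sum>i\<in>I. \<integral>xs. exp (lam * Z i xs) \<partial>Pn)"
    by (intro Bochner_Integration.integral_sum Pn.integrable_const_bound[where B="exp (lam * (2*b))"] AE_I2)
       (use Zm Zb lam in \<open>auto simp: abs_le_iff\<close>)
  also have "\<dots> \<le> (\<Sum>i\<in>I. exp (1/2))" by (intro sum_mono mgf)
  also have "\<dots> = exp (ln (card I) + 1/2)"
    using fin ne by (simp add: exp_add card_gt_0_iff)
  finally have "lam * (\<integral>xs. M xs \<partial>Pn) \<le> ln (card I) + 1/2" by simp
  hence "(\<integral>xs. M xs \<partial>Pn) \<le> (ln (card I) + 1/2) / lam" using lam by (simp add: field_simps)
  also have "\<dots> = b * (ln (card I) + 1/2) / sqrt n" unfolding lam_def using b n by simp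
  also have "\<dots> \<le> b * (ln (card I) + 1) / sqrt n" using b n by (intro divide_right_mono mult_left_mono) auto
  finally show "(\<integral>xs. (MAX i\<in>I. (1/real n) * (\<Sum>t<n. (\<integral>y. g i y \<partial>P) - g i (xs t))) \<partial>PiM {..<n} (\<lambda>_. P))
           \<le> b * (ln (card I) + 1) / sqrt n"
    unfolding M_def Z_def E_def Pn_def .
qed


definition fmin :: "(real^'p) set \<Rightarrow> real^'p \<Rightarrow> real" where
  "fmin C y = Min ((\<lambda>c. (norm (c - y))^2) ` C)"

definition rnd :: "real \<Rightarrow> real^'p \<Rightarrow> real^'p" where
  "rnd h c = (\<chi> a. h * of_int \<lfloor>c$a / h\<rfloor>)"

definition grid :: "real \<Rightarrow> int \<Rightarrow> (real^'p) set" where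
  "grid h K = (\<lambda>z. \<chi> a. h * of_int (z a)) ` (PiE UNIV (\<lambda>_. {-K..K}))"

definition clip :: "real \<Rightarrow> real \<Rightarrow> real" where
  "clip b t = max (-b) (min b t)"

lemma clip_id: "\<bar>t\<bar> \<le> b \<Longrightarrow> clip b t = t"
  unfolding clip_def by auto

lemma clip_bound: "b \<ge> 0 \<Longrightarrow> \<bar>clip b t\<bar> \<le> b"
  unfolding clip_def by auto

lemma proj_eq:
  fixes C :: "(real^'p) set"
  assumes "finite C" "C \<noteq> {}"
  shows "(norm (y - proj C y))^2 = fmin C y"
proof -
  let ?f = "\<lambda>c. (norm (c - y))^2"
  have "Min (?f ` C) \<in> ?f ` C" using assms by (intro Min_in) auto
  then obtain c0 where c0: "c0 \<in> C" "?f c0 = Min (?f ` C)" by auto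
  have ex: "\<exists>c. c \<in> C \<and> (\<forall>c'\<in>C. ?f c \<le> ?f c')"
    using c0 assms by (intro exI[of _ c0]) auto
  have p: "proj C y \<in> C \<and> (\<forall>c'\<in>C. ?f (proj C y) \<le> ?f c')"
    unfolding proj_def by (rule someI_ex[OF ex])
  have "?f (proj C y) = Min (?f ` C)"
    using p assms by (intro antisym Min_le Min.boundedI) auto
  thus ?thesis by (simp add: fmin_def norm_minus_commute)
qed

lemma min_diff:
  fixes u v :: "'i \<Rightarrow> real"
  assumes "finite K" "K \<noteq> {}" "\<And>i. i \<in> K \<Longrightarrow> \<bar>u i - v i\<bar> \<le> d"
  shows "\<bar>Min (u ` K) - Min (v ` K)\<bar> \<le> d"
proof -
  have "Min (u ` K) \<in> u ` K" "Min (v ` K) \<in> v ` K" using assms by (auto intro!: Min_in)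
  then obtain i1 i2 where i: "i1 \<in> K" "Min (u ` K) = u i1" "i2 \<in> K" "Min (v ` K) = v i2" by auto
  have "u i1 \<le> u i2" "v i2 \<le> v i1" using i assms by (metis Min_le finite_imageI imageI)+
  with assms(3)[OF i(1)] assms(3)[OF i(3)] i show ?thesis by (simp add: abs_le_iff)
qed

lemma sqdiff:
  fixes a b :: "'a::real_normed_vector"
  shows "\<bar>(norm a)^2 - (norm b)^2\<bar> \<le> norm (a - b) * (norm a + norm b)"
proof -
  have "(norm a)^2 - (norm b)^2 = (norm a - norm b) * (norm a + norm b)"
    by (simp add: power2_eq_square algebra_simps)
  hence "\<bar>(norm a)^2 - (norm b)^2\<bar> = \<bar>norm a - norm b\<bar> * (norm a + norm b)"
    by (simp add: abs_mult)
  also have "\<dots> \<le> norm (a - b) * (norm a + norm b)"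
    by (intro mult_right_mono norm_triangle_ineq3) auto
  finally show ?thesis .
qed

lemma normbox:
  fixes v :: "real^'p"
  assumes "\<And>a. \<bar>v $ a\<bar> \<le> R"
  shows "norm v \<le> real CARD('p) * R"
proof -
  have "norm v \<le> (\<Sum>a\<in>UNIV. \<bar>v$a\<bar>)" by (rule norm_le_l1_cart)
  also have "\<dots> \<le> (\<Sum>a\<in>(UNIV::'p set). R)" by (intro sum_mono assms)
  finally show ?thesis by simp
qed

lemma rnd_close:
  assumes "h > 0"
  shows "\<bar>rnd h c $ a - c $ a\<bar> \<le> h"
proof -
  have "of_int \<lfloor>c$a / h\<rfloor> \<le> c$a / h" "c$a / h < of_int \<lfloor>c$a / h\<rfloor> + 1"
    by linarith+
  hence "h * of_int \<lfloor>c$a / h\<rfloor> \<le> h * (c$a / h)" "h * (c$a / h) < h * (of_int \<lfloor>c$a / h\<rfloor> + 1)"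
    using assms by (intro mult_left_mono mult_strict_left_mono; simp)+
  hence "h * of_int \<lfloor>c$a / h\<rfloor> \<le> c$a" "c$a < h * of_int \<lfloor>c$a / h\<rfloor> + h"
    using assms by (simp_all add: algebra_simps)
  thus ?thesis unfolding rnd_def by simp
qed

lemma rnd_norm:
  fixes c :: "real^'p"
  assumes "h > 0"
  shows "norm (rnd h c - c) \<le> real CARD('p) * h"
  by (rule normbox) (use rnd_close[OF assms] in simp)

lemma rnd_grid:
  fixes c :: "real^'p"
  assumes "h > 0" "\<And>a. \<bar>c $ a\<bar> \<le> of_int K * h"
  shows "rnd h c \<in> grid h K"
proof -
  have "\<lfloor>c$a / h\<rfloor> \<in> {-K..K}" for a
  proof -
    have "c$a / h \<le> of_int K" using assms(2)[of a] assms(1) by (simp add: divide_le_eq abs_le_iff)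
    moreover have "- of_int K \<le> c$a / h" using assms(2)[of a] assms(1) by (simp add: le_divide_eq abs_le_iff)
    ultimately have "- of_int K \<le> c$a / h" "c$a / h \<le> of_int K" by auto
    thus ?thesis by (simp add: le_floor_iff floor_le_iff)
  qed
  hence "(\<lambda>a. \<lfloor>c$a / h\<rfloor>) \<in> PiE UNIV (\<lambda>_. {-K..K})" by auto
  thus ?thesis unfolding grid_def rnd_def by (intro image_eqI[OF refl])
qed

lemma grid_finite: "finite (grid h K :: (real^'p) set)"
  unfolding grid_def by (intro finite_imageI finite_PiE) auto

lemma grid_card: "K \<ge> 0 \<Longrightarrow> card (grid h K :: (real^'p) set) \<le> nat (2*K+1) ^ CARD('p)"
proof -
  assume K: "K \<ge> 0"
  have "card (grid h K :: (real^'p) set) \<le> card (PiE (UNIV::'p set) (\<lambda>_. {-K..K}))"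
    unfolding grid_def by (intro card_image_le finite_PiE) auto
  also have "\<dots> = nat (2*K+1) ^ CARD('p)"
    by (subst card_PiE) (use K in auto)
  finally show ?thesis .
qed

lemma grid_bound:
  assumes "x \<in> grid h K" "h > 0"
  shows "\<bar>x $ a\<bar> \<le> of_int K * h"
proof -
  obtain z where z0: "z \<in> PiE UNIV (\<lambda>_. {-K..K})" and z2: "x = (\<chi> a. h * of_int (z a))"
    using assms(1) unfolding grid_def by blast
  have z: "\<And>a. z a \<in> {-K..K}" "x = (\<chi> a. h * of_int (z a))" using z0 z2 by auto
  have "\<bar>of_int (z a)\<bar> \<le> (of_int K :: real)" using z(1)[of a] by (simp add: abs_le_iff)
  thus ?thesis using z(2) assms(2) by (simp add: abs_mult mult.commute mult_right_mono)
qed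


lemma fmin_image: "fmin (\<phi> ` K) y = Min ((\<lambda>i. (norm (\<phi> i - y))^2) ` K)"
  unfolding fmin_def by (simp add: image_image)

lemma sum_geom_aux: "(\<Sum>j<n. (2 * real j + 5) / 2^j) = 14 - 2 * (2 * real n + 7) / 2^n"
proof (induction n)
  case (Suc n)
  have "(\<Sum>j<Suc n. (2 * real j + 5) / 2^j) = 14 - 2 * (2 * real n + 7) / 2^n + (2 * real n + 5) / 2^n"
    using Suc by simp
  also have "\<dots> = 14 - 2 * (2 * real (Suc n) + 7) / 2^(Suc n)"
    by (simp add: field_simps)
  finally show ?case .
qed simp

lemma sum_geom_le: "(\<Sum>j<n. (2 * real j + 5) / 2^j) \<le> 14"
  unfolding sum_geom_aux by simp

lemma two_pow_sqrt: "n > 0 \<Longrightarrow> 1 / 2^n \<le> 1 / sqrt (real n)"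
proof -
  assume n: "n > 0"
  have "real n \<le> (real n)^2" using n by (simp add: power2_eq_square)
  hence "sqrt (real n) \<le> sqrt ((real n)^2)" by (rule real_sqrt_le_mono)
  hence "sqrt (real n) \<le> real n" by simp
  also have "real n \<le> 2^n" using of_nat_less_two_power[of n, where 'a=real] by linarith
  finally show ?thesis using n by (intro divide_left_mono) auto
qed

definition bzc :: "real \<Rightarrow> real \<Rightarrow> real" where "bzc p Bp = 4 * p^2 * Bp^2"
definition bjc :: "real \<Rightarrow> real \<Rightarrow> nat \<Rightarrow> real" where "bjc p Bp j = 8 * p^2 * Bp^2 / 2^j"

definition Kc :: "real \<Rightarrow> nat \<Rightarrow> real \<Rightarrow> real" where "Kc p k Bp = 128 * p^2 * Bp^2 * (p * k + 1)"

locale chn =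
  fixes P :: "'x measure" and y :: "'x \<Rightarrow> real^'p" and Bp :: real and k :: nat
  assumes P: "prob_space P" and ym: "y \<in> borel_measurable P"
    and yb: "\<And>x a. \<bar>y x $ a\<bar> \<le> Bp" and Bp: "Bp > 0" and k: "k \<ge> 1"
begin

interpretation P: prob_space P by (rule P)

definition h :: "nat \<Rightarrow> real" where "h j = Bp / 2^j"
definition G :: "nat \<Rightarrow> (real^'p) set" where "G j = grid (h j) (2^j)"
definition IJ :: "nat \<Rightarrow> (nat \<Rightarrow> real^'p) set" where "IJ j = PiE {..<k} (\<lambda>_. G j)"
definition F :: "(nat \<Rightarrow> real^'p) \<Rightarrow> 'x \<Rightarrow> real" where "F \<phi> x = fmin (\<phi> ` {..<k}) (y x)"
definition gg :: "nat \<Rightarrow> (nat \<Rightarrow> real^'p) \<times> (nat \<Rightarrow> real^'p) \<Rightarrow> 'x \<Rightarrow> real" where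
  "gg j q x = clip (bjc (real CARD('p)) Bp j) (F (fst q) x - F (snd q) x)"
definition D :: "nat \<Rightarrow> ('x \<Rightarrow> real) \<Rightarrow> (nat \<Rightarrow> 'x) \<Rightarrow> real" where
  "D n f xs = (1 / real n) * (\<Sum>t<n. (\<integral>z. f z \<partial>P) - f (xs t))"
definition box :: "(nat \<Rightarrow> real^'p) set" where "box = {\<phi>. \<forall>i<k. \<forall>a. \<bar>\<phi> i $ a\<bar> \<le> Bp}"

lemma h_pos: "h j > 0" unfolding h_def using Bp by simp

lemma G_bound: "c \<in> G j \<Longrightarrow> \<bar>c $ a\<bar> \<le> Bp"
  using grid_bound[of c "h j" "2^j" a] h_pos unfolding G_def h_def by simp

lemma IJ_box: "\<phi> \<in> IJ j \<Longrightarrow> \<phi> \<in> box"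
  unfolding IJ_def box_def using G_bound by (auto simp: PiE_iff)

lemma IJ_finite: "finite (IJ j)"
  unfolding IJ_def G_def by (intro finite_PiE grid_finite) auto

lemma F_meas: "F \<phi> \<in> borel_measurable P"
  unfolding F_def fmin_image using ym by (intro borel_measurable_Min) auto

lemma diff_norm:
  fixes u v :: "real^'p"
  assumes u: "\<And>a. \<bar>u $ a\<bar> \<le> Bp" and v: "\<And>a. \<bar>v $ a\<bar> \<le> Bp"
  shows "norm (u - v) \<le> 2 * real CARD('p) * Bp"
proof -
  have "\<bar>(u - v) $ a\<bar> \<le> 2 * Bp" for a
    using u[of a] v[of a] by (simp add: abs_le_iff)
  from normbox[OF this] show ?thesis by simp
qed

lemma F_bound: "\<phi> \<in> box \<Longrightarrow> \<bar>F \<phi> x\<bar> \<le> bzc (real CARD('p)) Bp"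
proof -
  assume "\<phi> \<in> box"
  have "0 \<in> {..<k}" using k by simp
  hence ne: "(\<lambda>i. (norm (\<phi> i - y x))^2) ` {..<k} \<noteq> {}" by blast
  have "Min ((\<lambda>i. (norm (\<phi> i - y x))^2) ` {..<k}) \<in> (\<lambda>i. (norm (\<phi> i - y x))^2) ` {..<k}"
    using ne by (intro Min_in) auto
  then obtain i where i: "i < k" "F \<phi> x = (norm (\<phi> i - y x))^2" unfolding F_def fmin_image by auto
  have "norm (\<phi> i - y x) \<le> 2 * real CARD('p) * Bp"
    using \<open>\<phi> \<in> box\<close> i(1) yb by (intro diff_norm) (auto simp: box_def)
  hence "(norm (\<phi> i - y x))^2 \<le> (2 * real CARD('p) * Bp)^2" by (intro power_mono) auto
  thus ?thesis using i unfolding bzc_def by (simp add: power_mult_distrib)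
qed

lemma F_diff:
  assumes "\<phi> \<in> box" "\<psi> \<in> box" "\<And>i. i < k \<Longrightarrow> norm (\<phi> i - \<psi> i) \<le> \<delta>"
  shows "\<bar>F \<phi> x - F \<psi> x\<bar> \<le> 4 * real CARD('p) * Bp * \<delta>"
  unfolding F_def fmin_image
proof (rule min_diff)
  fix i assume "i \<in> {..<k}"
  hence i: "i < k" by simp
  have n1: "norm (\<phi> i - y x) \<le> 2 * real CARD('p) * Bp" using assms(1) i yb by (intro diff_norm) (auto simp: box_def)
  have n2: "norm (\<psi> i - y x) \<le> 2 * real CARD('p) * Bp" using assms(2) i yb by (intro diff_norm) (auto simp: box_def)
  have "\<bar>(norm (\<phi> i - y x))^2 - (norm (\<psi> i - y x))^2\<bar>
        \<le> norm ((\<phi> i - y x) - (\<psi> i - y x)) * (norm (\<phi> i - y x) + norm (\<psi> i - y x))"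
    by (rule sqdiff)
  also have "\<dots> \<le> \<delta> * (4 * real CARD('p) * Bp)"
    using assms(3)[OF i] n1 n2 order_trans[OF norm_ge_zero assms(3)[OF i]] by (intro mult_mono) auto
  finally show "\<bar>(norm (\<phi> i - y x))^2 - (norm (\<psi> i - y x))^2\<bar> \<le> 4 * real CARD('p) * Bp * \<delta>"
    by (simp add: mult_ac)
next
  have "0 \<in> {..<k}" using k by simp
  thus "{..<k} \<noteq> {}" by blast
qed simp

lemma F_int: "\<phi> \<in> box \<Longrightarrow> integrable P (F \<phi>)"
  by (intro P.integrable_const_bound[where B="bzc (real CARD('p)) Bp"] AE_I2 F_meas) (use F_bound in auto)

definition chainpt :: "(nat \<Rightarrow> real^'p) \<Rightarrow> nat \<Rightarrow> (nat \<Rightarrow> real^'p)" where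
  "chainpt e j = restrict (\<lambda>i. rnd (h j) (e i)) {..<k}"

lemma chainpt_IJ: "e \<in> box \<Longrightarrow> chainpt e j \<in> IJ j"
  unfolding chainpt_def IJ_def G_def
  using Bp by (auto simp: PiE_iff box_def h_def intro!: rnd_grid)

lemma chainpt_close: "i < k \<Longrightarrow> norm (chainpt e j i - e i) \<le> real CARD('p) * h j"
  unfolding chainpt_def using rnd_norm[OF h_pos] by simp


lemma G_ne: "(0::real^'p) \<in> G j"
proof -
  have "rnd (h j) (0::real^'p) \<in> G j"
    unfolding G_def using h_pos Bp by (intro rnd_grid) (auto intro: mult_nonneg_nonneg less_imp_le)
  moreover have "rnd (h j) (0::real^'p) = 0" unfolding rnd_def by (simp add: vec_eq_iff)
  ultimately show ?thesis by simp
qed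

lemma card_IJ: "real (card (IJ j)) \<le> 2 ^ ((j+2) * CARD('p) * k)"
proof -
  have e1: "card (IJ j) = card (G j) ^ k" unfolding IJ_def by (simp add: card_PiE)
  have e2: "card (G j) \<le> nat (2 * 2^j + 1) ^ CARD('p)"
    unfolding G_def by (rule grid_card) simp
  have e3: "nat (2 * 2^j + 1) = 2^(j+1) + (1::nat)"
    by (simp add: nat_add_distrib nat_mult_distrib nat_power_eq)
  have e4: "(2^(j+1) + 1::nat) \<le> 2^(j+2)" by simp
  have c1: "card (G j) \<le> ((2::nat)^(j+2)) ^ CARD('p)"
    using e2 e3 e4 by (metis order.trans power_mono zero_le)
  have "card (G j) ^ k \<le> (((2::nat)^(j+2)) ^ CARD('p)) ^ k"
    by (rule power_mono[OF c1]) simp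
  also have "\<dots> = 2 ^ ((j+2) * CARD('p) * k)" by (simp only: power_mult)
  finally have "card (IJ j) \<le> 2 ^ ((j+2) * CARD('p) * k)"
    using e1 by simp
  hence "real (card (IJ j)) \<le> real (2 ^ ((j+2) * CARD('p) * k))" by (simp only: of_nat_le_iff)
  thus ?thesis by simp
qed

lemma card_IJ_pos: "card (IJ j) > 0"
proof -
  have "(\<lambda>_\<in>{..<k}. 0) \<in> IJ j" unfolding IJ_def using G_ne by auto
  thus ?thesis using IJ_finite by (auto simp: card_gt_0_iff)
qed

lemma ln_card_IJ: "ln (real (card (IJ j))) \<le> real CARD('p) * real k * (real j + 2)"
proof -
  have "ln (real (card (IJ j))) \<le> ln (2 ^ ((j+2) * CARD('p) * k))"
    using card_IJ card_IJ_pos by (subst ln_le_cancel_iff) auto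
  also have "\<dots> = real ((j+2) * CARD('p) * k) * ln 2" by (simp add: ln_realpow)
  also have "\<dots> \<le> real ((j+2) * CARD('p) * k) * 1"
    using ln_2_less_1 by (intro mult_left_mono) auto
  finally show ?thesis by (simp add: algebra_simps)
qed

lemma D_diff: "integrable P f \<Longrightarrow> integrable P g \<Longrightarrow> D n (\<lambda>x. f x - g x) xs = D n f xs - D n g xs"
proof -
  assume fi: "integrable P f" and gi: "integrable P g"
  have "(\<Sum>t<n. (\<integral>z. f z - g z \<partial>P) - (f (xs t) - g (xs t)))
        = (\<Sum>t<n. ((\<integral>z. f z \<partial>P) - f (xs t)) - ((\<integral>z. g z \<partial>P) - g (xs t)))"
    using fi gi by (intro sum.cong refl) (simp add: Bochner_Integration.integral_diff)
  also have "\<dots> = (\<Sum>t<n. (\<integral>z. f z \<partial>P) - f (xs t)) - (\<Sum>t<n. (\<integral>z. g z \<partial>P) - g (xs t))"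
    by (rule sum_subtractf)
  finally show ?thesis unfolding D_def by (simp add: right_diff_distrib)
qed

lemma D_bound:
  assumes "n > 0" "\<And>x. \<bar>f x\<bar> \<le> c" "integrable P f"
  shows "D n f xs \<le> 2 * c"
proof -
  have "\<bar>\<integral>z. f z \<partial>P\<bar> \<le> (\<integral>z. c \<partial>P)"
    using assms by (intro order.trans[OF integral_abs_bound] integral_mono) auto
  hence I: "\<bar>\<integral>z. f z \<partial>P\<bar> \<le> c" by (simp add: P.prob_space)
  have "(\<Sum>t<n. (\<integral>z. f z \<partial>P) - f (xs t)) \<le> (\<Sum>t<n. 2 * c)"
  proof (intro sum_mono)
    fix t show "(\<integral>z. f z \<partial>P) - f (xs t) \<le> 2 * c" using I assms(2)[of "xs t"] by (simp add: abs_le_iff)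
  qed
  thus ?thesis unfolding D_def using assms(1) by (simp add: field_simps)
qed

definition M0 :: "nat \<Rightarrow> (nat \<Rightarrow> 'x) \<Rightarrow> real" where
  "M0 n xs = (MAX \<phi>\<in>IJ 0. D n (F \<phi>) xs)"
definition Mj :: "nat \<Rightarrow> nat \<Rightarrow> (nat \<Rightarrow> 'x) \<Rightarrow> real" where
  "Mj n j xs = (MAX q\<in>IJ (Suc j) \<times> IJ j. D n (gg j q) xs)"
definition W :: "nat \<Rightarrow> (nat \<Rightarrow> 'x) \<Rightarrow> real" where
  "W n xs = M0 n xs + (\<Sum>j<n. Mj n j xs) + 8 * real CARD('p)^2 * Bp^2 / 2^n"

lemma chain_ineq:
  assumes e: "e \<in> box" and n: "n > 0"
  shows "D n (F e) xs \<le> W n xs"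
proof -
  define \<phi> where "\<phi> = chainpt e"
  have \<phi>box: "\<phi> j \<in> box" for j unfolding \<phi>_def using chainpt_IJ[OF e] IJ_box by blast
  have \<phi>IJ: "\<phi> j \<in> IJ j" for j unfolding \<phi>_def using chainpt_IJ[OF e] by blast
  define a where "a j = D n (F (\<phi> j)) xs" for j
  have tel: "(\<Sum>j<n. a (Suc j) - a j) = a n - a 0" by (rule sum_lessThan_telescope)
  have step: "a (Suc j) - a j \<le> Mj n j xs" for j
  proof -
    have cl: "norm (\<phi> (Suc j) i - \<phi> j i) \<le> 2 * real CARD('p) * h j" if i: "i < k" for i
    proof -
      have "norm (\<phi> (Suc j) i - \<phi> j i) \<le> norm (\<phi> (Suc j) i - e i) + norm (\<phi> j i - e i)"
        by (rule order.trans[OF _ norm_triangle_ineq4]) simp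
      also have "\<dots> \<le> real CARD('p) * h (Suc j) + real CARD('p) * h j"
        unfolding \<phi>_def using i by (intro add_mono chainpt_close)
      also have "h (Suc j) \<le> h j" unfolding h_def using Bp by (simp add: field_simps)
      hence "real CARD('p) * h (Suc j) + real CARD('p) * h j \<le> 2 * real CARD('p) * h j"
        by (simp add: algebra_simps mult_left_mono)
      finally show ?thesis .
    qed
    have fb: "\<bar>F (\<phi> (Suc j)) x - F (\<phi> j) x\<bar> \<le> bjc (real CARD('p)) Bp j" for x
    proof -
      have "\<bar>F (\<phi> (Suc j)) x - F (\<phi> j) x\<bar> \<le> 4 * real CARD('p) * Bp * (2 * real CARD('p) * h j)"
        by (intro F_diff \<phi>box cl)
      also have "\<dots> = bjc (real CARD('p)) Bp j" unfolding bjc_def h_def by (simp add: power2_eq_square)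
      finally show ?thesis .
    qed
    have "gg j (\<phi> (Suc j), \<phi> j) = (\<lambda>x. F (\<phi> (Suc j)) x - F (\<phi> j) x)"
      unfolding gg_def using fb by (auto intro!: clip_id)
    hence "a (Suc j) - a j = D n (gg j (\<phi> (Suc j), \<phi> j)) xs"
      unfolding a_def by (simp add: D_diff F_int \<phi>box)
    also have "\<dots> \<le> Mj n j xs"
      unfolding Mj_def using \<phi>IJ by (intro Max_ge finite_imageI) (auto intro: finite_cartesian_product IJ_finite)
    finally show ?thesis .
  qed
  have a0: "a 0 \<le> M0 n xs"
    unfolding M0_def a_def using \<phi>IJ by (intro Max_ge finite_imageI IJ_finite) auto
  have last: "D n (F e) xs - a n \<le> 8 * real CARD('p)^2 * Bp^2 / 2^n"
  proof -
    have fb: "\<bar>F e x - F (\<phi> n) x\<bar> \<le> 4 * real CARD('p)^2 * Bp^2 / 2^n" for x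
    proof -
      have "\<bar>F e x - F (\<phi> n) x\<bar> \<le> 4 * real CARD('p) * Bp * (real CARD('p) * h n)"
        using chainpt_close[of _ e n] by (intro F_diff e \<phi>box) (auto simp: \<phi>_def norm_minus_commute)
      also have "\<dots> = 4 * real CARD('p)^2 * Bp^2 / 2^n" unfolding h_def by (simp add: power2_eq_square)
      finally show ?thesis .
    qed
    have "D n (F e) xs - a n = D n (\<lambda>x. F e x - F (\<phi> n) x) xs"
      unfolding a_def by (simp add: D_diff F_int \<phi>box e)
    also have "\<dots> \<le> 2 * (4 * real CARD('p)^2 * Bp^2 / 2^n)"
      using fb n by (intro D_bound Bochner_Integration.integrable_diff F_int \<phi>box e)
    finally show ?thesis by simp
  qed
  have "D n (F e) xs = a 0 + (\<Sum>j<n. a (Suc j) - a j) + (D n (F e) xs - a n)"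
    using tel by simp
  also have "\<dots> \<le> M0 n xs + (\<Sum>j<n. Mj n j xs) + 8 * real CARD('p)^2 * Bp^2 / 2^n"
    by (intro add_mono a0 sum_mono step last)
  finally show ?thesis unfolding W_def .
qed


lemma gg_meas: "gg j q \<in> borel_measurable P"
  unfolding gg_def clip_def using F_meas[of "fst q"] F_meas[of "snd q"] by measurable

lemma gg_bound: "\<bar>gg j q x\<bar> \<le> bjc (real CARD('p)) Bp j"
  unfolding gg_def by (rule clip_bound) (simp add: bjc_def)

lemma bjc_pos: "bjc (real CARD('p)) Bp j > 0" unfolding bjc_def using Bp by simp
lemma bzc_pos: "bzc (real CARD('p)) Bp > 0" unfolding bzc_def using Bp by simp

lemma M0_eq: "M0 n = (\<lambda>xs. MAX i\<in>IJ 0. (1/real n) * (\<Sum>t<n. (\<integral>z. F i z \<partial>P) - F i (xs t)))"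
  by (simp add: M0_def D_def fun_eq_iff)
lemma Mj_eq: "Mj n j = (\<lambda>xs. MAX i\<in>IJ (Suc j) \<times> IJ j. (1/real n) * (\<Sum>t<n. (\<integral>z. gg j i z \<partial>P) - gg j i (xs t)))"
  by (simp add: Mj_def D_def fun_eq_iff)

lemma IJ_ne: "IJ j \<noteq> {}" using card_IJ_pos[of j] by auto

lemma M0_int: "n > 0 \<Longrightarrow> integrable (PiM {..<n} (\<lambda>_. P)) (M0 n)"
  unfolding M0_eq
  by (rule maxineq(1)[OF P IJ_finite IJ_ne _ bzc_pos F_meas]) (use F_bound IJ_box in auto)
lemma M0_le: "n > 0 \<Longrightarrow> (\<integral>xs. M0 n xs \<partial>PiM {..<n} (\<lambda>_. P))
     \<le> bzc (real CARD('p)) Bp * (ln (card (IJ 0)) + 1) / sqrt n"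
  unfolding M0_eq
  by (rule maxineq(2)[OF P IJ_finite IJ_ne _ bzc_pos F_meas]) (use F_bound IJ_box in auto)

lemma Mj_int: "n > 0 \<Longrightarrow> integrable (PiM {..<n} (\<lambda>_. P)) (Mj n j)"
  unfolding Mj_eq
  by (rule maxineq(1)[OF P _ _ _ bjc_pos gg_meas gg_bound])
     (auto intro: finite_cartesian_product IJ_finite simp: IJ_ne)
lemma Mj_le: "n > 0 \<Longrightarrow> (\<integral>xs. Mj n j xs \<partial>PiM {..<n} (\<lambda>_. P))
     \<le> bjc (real CARD('p)) Bp j * (ln (card (IJ (Suc j) \<times> IJ j)) + 1) / sqrt n"
  unfolding Mj_eq
  by (rule maxineq(2)[OF P _ _ _ bjc_pos gg_meas gg_bound])
     (auto intro: finite_cartesian_product IJ_finite simp: IJ_ne)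

lemma W_int: "n > 0 \<Longrightarrow> integrable (PiM {..<n} (\<lambda>_. P)) (W n)"
proof -
  assume n: "n > 0"
  interpret Pn: prob_space "PiM {..<n} (\<lambda>_. P)" by (intro prob_space_PiM) (simp add: P)
  show ?thesis unfolding W_def
    by (intro Bochner_Integration.integrable_add Bochner_Integration.integrable_sum M0_int Mj_int
      Pn.integrable_const n)
qed

lemma W_le: "n > 0 \<Longrightarrow> (\<integral>xs. W n xs \<partial>PiM {..<n} (\<lambda>_. P)) \<le> Kc (real CARD('p)) k Bp / sqrt n"
proof -
  assume n: "n > 0"
  define pc where "pc = real CARD('p)"
  have pc: "pc > 0" unfolding pc_def by simp
  interpret Pn: prob_space "PiM {..<n} (\<lambda>_. P)" by (intro prob_space_PiM) (simp add: P)
  have sn: "sqrt (real n) > 0" using n by simp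
  have "(\<integral>xs. W n xs \<partial>PiM {..<n} (\<lambda>_. P)) =
        (\<integral>xs. M0 n xs \<partial>PiM {..<n} (\<lambda>_. P)) + (\<Sum>j<n. \<integral>xs. Mj n j xs \<partial>PiM {..<n} (\<lambda>_. P))
        + 8 * pc^2 * Bp^2 / 2^n"
    unfolding W_def pc_def using n
    by (simp add: Bochner_Integration.integral_add Bochner_Integration.integrable_sum
        Bochner_Integration.integral_sum M0_int Mj_int Pn.prob_space)
  also have "\<dots> \<le> 4 * pc^2 * Bp^2 * (2 * pc * k + 1) / sqrt n
        + (\<Sum>j<n. 8 * pc^2 * Bp^2 * (pc * k + 1) * ((2 * real j + 5) / 2^j) / sqrt n)
        + 8 * pc^2 * Bp^2 / sqrt n"
  proof (intro add_mono sum_mono)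
    have "ln (card (IJ 0)) \<le> pc * k * 2" using ln_card_IJ[of 0] unfolding pc_def by simp
    hence "bzc pc Bp * (ln (card (IJ 0)) + 1) / sqrt n \<le> bzc pc Bp * (pc * k * 2 + 1) / sqrt n"
      using sn Bp by (intro divide_right_mono mult_left_mono) (auto simp: bzc_def)
    thus "(\<integral>xs. M0 n xs \<partial>PiM {..<n} (\<lambda>_. P)) \<le> 4 * pc^2 * Bp^2 * (2 * pc * k + 1) / sqrt n"
      using M0_le[OF n] unfolding pc_def bzc_def by (simp add: mult_ac)
  next
    fix j assume "j \<in> {..<n}"
    have "ln (card (IJ (Suc j) \<times> IJ j)) = ln (card (IJ (Suc j))) + ln (card (IJ j))"
      using card_IJ_pos[of j] card_IJ_pos[of "Suc j"] by (simp add: card_cartesian_product ln_mult)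
    also have "\<dots> \<le> pc * k * (real j + 3) + pc * k * (real j + 2)"
      using ln_card_IJ[of j] ln_card_IJ[of "Suc j"] unfolding pc_def by (intro add_mono) (auto simp: add_ac)
    finally have L: "ln (card (IJ (Suc j) \<times> IJ j)) + 1 \<le> (pc * k + 1) * (2 * real j + 5)"
      using pc by (simp add: algebra_simps)
    have "(\<integral>xs. Mj n j xs \<partial>PiM {..<n} (\<lambda>_. P)) \<le> bjc pc Bp j * (ln (card (IJ (Suc j) \<times> IJ j)) + 1) / sqrt n"
      using Mj_le[OF n] unfolding pc_def .
    also have "\<dots> \<le> bjc pc Bp j * ((pc * k + 1) * (2 * real j + 5)) / sqrt n"
      using sn L bjc_pos[of j] unfolding pc_def by (intro divide_right_mono mult_left_mono) (auto intro: less_imp_le)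
    also have "\<dots> = 8 * pc^2 * Bp^2 * (pc * k + 1) * ((2 * real j + 5) / 2^j) / sqrt n"
      unfolding bjc_def by (simp add: field_simps)
    finally show "(\<integral>xs. Mj n j xs \<partial>PiM {..<n} (\<lambda>_. P)) \<le> 8 * pc^2 * Bp^2 * (pc * k + 1) * ((2 * real j + 5) / 2^j) / sqrt n" .
  next
    have "8 * pc^2 * Bp^2 * (1 / 2^n) \<le> 8 * pc^2 * Bp^2 * (1 / sqrt n)"
      using two_pow_sqrt[OF n] by (intro mult_left_mono) auto
    thus "8 * pc^2 * Bp^2 / 2^n \<le> 8 * pc^2 * Bp^2 / sqrt n" by simp
  qed
  also have "(\<Sum>j<n. 8 * pc^2 * Bp^2 * (pc * k + 1) * ((2 * real j + 5) / 2^j) / sqrt n)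
      = 8 * pc^2 * Bp^2 * (pc * k + 1) * (\<Sum>j<n. (2 * real j + 5) / 2^j) / sqrt n"
    by (simp add: sum_distrib_left sum_divide_distrib)
  also have "\<dots> \<le> 8 * pc^2 * Bp^2 * (pc * k + 1) * 14 / sqrt n"
    using sn pc by (intro divide_right_mono mult_left_mono sum_geom_le) auto
  finally have "(\<integral>xs. W n xs \<partial>PiM {..<n} (\<lambda>_. P)) \<le>
     (4 * pc^2 * Bp^2 * (2 * pc * k + 1) + 8 * pc^2 * Bp^2 * (pc * k + 1) * 14 + 8 * pc^2 * Bp^2) / sqrt n"
    by (simp add: add_divide_distrib)
  also have "\<dots> \<le> Kc pc k Bp / sqrt n"
    unfolding Kc_def using sn pc by (intro divide_right_mono) (auto simp: algebra_simps)
  finally show ?thesis unfolding pc_def .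
qed
end


lemma meas_nth:
  fixes f :: "'a \<Rightarrow> real^'p"
  assumes "f \<in> borel_measurable M"
  shows "(\<lambda>x. f x $ a) \<in> borel_measurable M"
proof -
  have "(\<lambda>v::real^'p. v $ a) \<in> borel_measurable borel"
    by (intro borel_measurable_continuous_onI continuous_on_component continuous_on_id)
  from measurable_compose[OF assms this] show ?thesis .
qed

lemma box_diff_norm:
  fixes u v :: "real^'p"
  assumes u: "\<And>a. \<bar>u $ a\<bar> \<le> R" and v: "\<And>a. \<bar>v $ a\<bar> \<le> R"
  shows "norm (u - v) \<le> 2 * real CARD('p) * R"
proof -
  have "\<bar>(u - v) $ a\<bar> \<le> 2 * R" for a
    using u[of a] v[of a] by (simp add: abs_le_iff)
  from normbox[OF this] show ?thesis by simp
qed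

lemma fmin_nonneg: "finite C \<Longrightarrow> C \<noteq> {} \<Longrightarrow> 0 \<le> fmin C y"
  unfolding fmin_def by (subst Min_ge_iff) auto

lemma fmin_le:
  fixes C :: "(real^'p) set"
  assumes "finite C" "C \<noteq> {}" "\<And>c a. c \<in> C \<Longrightarrow> \<bar>c $ a\<bar> \<le> R" "\<And>a. \<bar>y $ a\<bar> \<le> R"
  shows "fmin C y \<le> (2 * real CARD('p) * R)^2"
proof -
  obtain c where c: "c \<in> C" using assms(2) by auto
  have "fmin C y \<le> (norm (c - y))^2" unfolding fmin_def using assms(1) c by (intro Min_le) auto
  also have "\<dots> \<le> (2 * real CARD('p) * R)^2"
    using assms(3)[OF c] assms(4) by (intro power_mono box_diff_norm) auto
  finally show ?thesis .
qed

lemma fmin_lip: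
  fixes C :: "(real^'p) set"
  assumes "finite C" "C \<noteq> {}" "\<And>c a. c \<in> C \<Longrightarrow> \<bar>c $ a\<bar> \<le> R" "\<And>a. \<bar>u $ a\<bar> \<le> R" "\<And>a. \<bar>v $ a\<bar> \<le> R"
  shows "\<bar>fmin C u - fmin C v\<bar> \<le> 4 * real CARD('p) * R * norm (u - v)"
  unfolding fmin_def
proof (rule min_diff[OF assms(1,2)])
  fix c assume c: "c \<in> C"
  have n1: "norm (c - u) \<le> 2 * real CARD('p) * R" using assms(3)[OF c] assms(4) by (intro box_diff_norm)
  have n2: "norm (c - v) \<le> 2 * real CARD('p) * R" using assms(3)[OF c] assms(5) by (intro box_diff_norm)
  have "\<bar>(norm (c - u))^2 - (norm (c - v))^2\<bar> \<le> norm ((c - u) - (c - v)) * (norm (c - u) + norm (c - v))"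
    by (rule sqdiff)
  also have "\<dots> \<le> norm (u - v) * (4 * real CARD('p) * R)"
    using n1 n2 by (intro mult_mono) (auto simp: norm_minus_commute)
  finally show "\<bar>(norm (c - u))^2 - (norm (c - v))^2\<bar> \<le> 4 * real CARD('p) * R * norm (u - v)"
    by (simp add: mult_ac)
qed

lemma fmin_meas:
  fixes C :: "(real^'p) set"
  assumes "finite C" "f \<in> borel_measurable M"
  shows "(\<lambda>x. fmin C (f x)) \<in> borel_measurable M"
  unfolding fmin_def using assms by (intro borel_measurable_Min) auto

locale thmctx =
  fixes PX :: "(real^'d) measure" and Xset :: "(real^'d) set"
    and mu :: "real^'d \<Rightarrow> real^'p"
    and Q :: "'w measure"
    and muhat :: "nat \<Rightarrow> 'w \<Rightarrow> real^'d \<Rightarrow> real^'p"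
    and Chat :: "nat \<Rightarrow> 'w \<Rightarrow> (nat \<Rightarrow> real^'d) \<Rightarrow> (real^'p) set"
    and Cstar :: "(real^'p) set"
    and k :: nat and \<kappa> \<alpha> B :: real
  assumes PX: "prob_space PX" "sets PX = sets borel"
    and Xset: "Xset \<in> sets borel" "AE x in PX. x \<in> Xset"
    and Q: "prob_space Q"
    and mu_meas: "mu \<in> borel_measurable PX"
    and muhat_meas: "\<And>n. (\<lambda>(\<omega>, x). muhat n \<omega> x) \<in> borel_measurable (Q \<Otimes>\<^sub>M PX)"
    and sup_meas: "\<And>n a. (\<lambda>\<omega>. supnorm Xset (\<lambda>x. muhat n \<omega> x $ a - mu x $ a)) \<in> borel_measurable Q"
    and k: "k \<ge> 1"
    and Chat_min: "\<And>n \<omega> xs. \<omega> \<in> space Q \<Longrightarrow> xs \<in> space (PiM {..<n} (\<lambda>_. PX)) \<Longrightarrow>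
        Chat n \<omega> xs \<in> codebooks mu Xset k \<and>
        (\<forall>C\<in>codebooks mu Xset k. emp_risk n (muhat n \<omega>) xs (Chat n \<omega> xs) \<le> emp_risk n (muhat n \<omega>) xs C)"
    and Chat_meas: "\<And>n. (\<lambda>(\<omega>, xs). clust_risk PX mu (Chat n \<omega> xs))
        \<in> borel_measurable (Q \<Otimes>\<^sub>M PiM {..<n} (\<lambda>_. PX))"
    and Cstar: "Cstar \<in> optimal_codebooks PX mu Xset k"
    and margin: "margin_condition PX mu Xset k \<kappa> \<alpha>"
    and A1_mu: "\<And>a x. x \<in> Xset \<Longrightarrow> \<bar>mu x $ a\<bar> \<le> B"
    and A1_muhat: "\<And>n. AE \<omega> in Q. \<forall>a. \<forall>x\<in>Xset. \<bar>muhat n \<omega> x $ a\<bar> \<le> B"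
begin

interpretation PX: prob_space PX by (rule PX(1))
interpretation Q: prob_space Q by (rule Q)

definition Bp :: real where "Bp = \<bar>B\<bar> + 1"
lemma Bp_pos: "Bp > 0" unfolding Bp_def by simp
lemma B_Bp: "B \<le> Bp" unfolding Bp_def by simp

lemma Xset_sets: "Xset \<in> sets PX" using Xset(1) PX(2) by simp

lemma cb_props:
  assumes "C \<in> codebooks mu Xset k"
  shows "finite C" "C \<noteq> {}" "card C = k" "\<And>c a. c \<in> C \<Longrightarrow> \<bar>c $ a\<bar> \<le> Bp"
proof -
  show "finite C" "card C = k" using assms unfolding codebooks_def by auto
  thus "C \<noteq> {}" using k by auto
  fix c a assume "c \<in> C"
  then obtain x where "x \<in> Xset" "c = mu x" using assms unfolding codebooks_def by auto
  thus "\<bar>c $ a\<bar> \<le> Bp" using A1_mu[of x a] B_Bp by simp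
qed

lemma Cstar_cb: "Cstar \<in> codebooks mu Xset k"
  using Cstar unfolding optimal_codebooks_def by auto

lemma R_eq:
  assumes "C \<in> codebooks mu Xset k"
  shows "clust_risk PX mu C = (\<integral>x. fmin C (mu x) \<partial>PX)"
  unfolding clust_risk_def using proj_eq[OF cb_props(1,2)[OF assms]] by simp

lemma R_int:
  assumes "C \<in> codebooks mu Xset k"
  shows "integrable PX (\<lambda>x. fmin C (mu x))"
proof (rule PX.integrable_const_bound[where B="(2 * real CARD('p) * Bp)^2"])
  show "AE x in PX. norm (fmin C (mu x)) \<le> (2 * real CARD('p) * Bp)^2"
    using Xset(2)
  proof eventually_elim
    case (elim x)
    have "\<bar>mu x $ a\<bar> \<le> Bp" for a using A1_mu[OF elim] B_Bp by (metis order.trans)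
    thus ?case using fmin_le[OF cb_props(1,2,4)[OF assms]] fmin_nonneg[OF cb_props(1,2)[OF assms]]
      by auto
  qed
qed (intro fmin_meas cb_props(1)[OF assms] mu_meas)

lemma R_bounds:
  assumes "C \<in> codebooks mu Xset k"
  shows "0 \<le> clust_risk PX mu C" "clust_risk PX mu C \<le> (2 * real CARD('p) * Bp)^2"
proof -
  show "0 \<le> clust_risk PX mu C" unfolding R_eq[OF assms]
    by (intro integral_nonneg_AE AE_I2 fmin_nonneg cb_props[OF assms])
  have "(\<integral>x. fmin C (mu x) \<partial>PX) \<le> (\<integral>x. (2 * real CARD('p) * Bp)^2 \<partial>PX)"
  proof (intro integral_mono_AE R_int[OF assms] PX.integrable_const)
    show "AE x in PX. fmin C (mu x) \<le> (2 * real CARD('p) * Bp)^2"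
      using Xset(2)
    proof eventually_elim
      case (elim x)
      have "\<bar>mu x $ a\<bar> \<le> Bp" for a using A1_mu[OF elim] B_Bp by (metis order.trans)
      thus ?case using fmin_le[OF cb_props(1,2,4)[OF assms]] by auto
    qed
  qed
  thus "clust_risk PX mu C \<le> (2 * real CARD('p) * Bp)^2" unfolding R_eq[OF assms] by (simp add: PX.prob_space)
qed

lemma opt: "C \<in> codebooks mu Xset k \<Longrightarrow> clust_risk PX mu Cstar \<le> clust_risk PX mu C"
  using Cstar unfolding optimal_codebooks_def by auto

end


locale om = thmctx PX Xset mu Q muhat Chat Cstar k \<kappa> \<alpha> B
  for PX :: "(real^'d) measure" and Xset and mu :: "real^'d \<Rightarrow> real^'p" and Q :: "'w measure"
    and muhat Chat Cstar k \<kappa> \<alpha> B +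
  fixes n :: nat and \<omega> :: 'w
  assumes n: "n > 0" and \<omega>: "\<omega> \<in> space Q"
    and good: "\<forall>a. \<forall>x\<in>Xset. \<bar>muhat n \<omega> x $ a\<bar> \<le> B"
begin

interpretation PX: prob_space PX by (rule PX(1))
interpretation Q: prob_space Q by (rule Q)
interpretation Pn: prob_space "PiM {..<n} (\<lambda>_. PX)" by (intro prob_space_PiM) (simp add: PX(1))

definition m where "m = muhat n \<omega>"
definition y where "y x = (if x \<in> Xset then m x else 0)"

lemma m_meas: "m \<in> borel_measurable PX"
  using measurable_Pair2[OF muhat_meas[of n] \<omega>] unfolding m_def by simp

lemma y_meas: "y \<in> borel_measurable PX"
  unfolding y_def using Xset_sets m_meas by (intro measurable_If_set) auto

lemma y_bound: "\<bar>y x $ a\<bar> \<le> Bp"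
  unfolding y_def m_def using good B_Bp Bp_pos by (auto intro: order.trans)

lemma mu_bound: "x \<in> Xset \<Longrightarrow> \<bar>mu x $ a\<bar> \<le> Bp"
  using A1_mu B_Bp by (metis order.trans)

lemma m_bound: "x \<in> Xset \<Longrightarrow> \<bar>m x $ a\<bar> \<le> Bp"
  using good B_Bp unfolding m_def by (metis order.trans)

interpretation C: chn PX y Bp k
  by unfold_locales (use PX(1) y_meas y_bound Bp_pos k in auto)

definition Lsum where "Lsum = (\<Sum>a\<in>UNIV. L1norm PX (\<lambda>x. m x $ a - mu x $ a))"

lemma dif_int: "integrable PX (\<lambda>x. \<bar>m x $ a - mu x $ a\<bar>)"
proof (rule PX.integrable_const_bound[where B="2 * Bp"])
  show "AE x in PX. norm \<bar>m x $ a - mu x $ a\<bar> \<le> 2 * Bp"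
    using Xset(2)
  proof eventually_elim
    case (elim x)
    have "\<bar>m x $ a\<bar> \<le> Bp" "\<bar>mu x $ a\<bar> \<le> Bp" using m_bound mu_bound elim by auto
    thus ?case by (auto simp: abs_le_iff)
  qed
qed (use meas_nth[OF m_meas] meas_nth[OF mu_meas] in measurable)

lemma fy_int: "C \<in> codebooks mu Xset k \<Longrightarrow> integrable PX (\<lambda>x. fmin C (y x))"
  by (rule PX.integrable_const_bound[where B="(2 * real CARD('p) * Bp)^2"])
     (use fmin_le[OF cb_props(1,2,4) y_bound] fmin_nonneg[OF cb_props(1,2)] fmin_meas[OF cb_props(1) y_meas]
      in auto)

lemma Rt_close:
  assumes C: "C \<in> codebooks mu Xset k"
  shows "\<bar>clust_risk PX mu C - (\<integral>x. fmin C (y x) \<partial>PX)\<bar> \<le> 4 * real CARD('p) * Bp * Lsum"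
proof -
  have "clust_risk PX mu C - (\<integral>x. fmin C (y x) \<partial>PX) = (\<integral>x. fmin C (mu x) - fmin C (y x) \<partial>PX)"
    unfolding R_eq[OF C] using R_int[OF C] fy_int[OF C] by (simp add: Bochner_Integration.integral_diff)
  also have "\<bar>\<dots>\<bar> \<le> (\<integral>x. \<bar>fmin C (mu x) - fmin C (y x)\<bar> \<partial>PX)" by (rule integral_abs_bound)
  also have "\<dots> \<le> (\<integral>x. 4 * real CARD('p) * Bp * (\<Sum>a\<in>UNIV. \<bar>m x $ a - mu x $ a\<bar>) \<partial>PX)"
  proof (intro integral_mono_AE)
    show "integrable PX (\<lambda>x. \<bar>fmin C (mu x) - fmin C (y x)\<bar>)"
      using R_int[OF C] fy_int[OF C] by auto
    show "integrable PX (\<lambda>x. 4 * real CARD('p) * Bp * (\<Sum>a\<in>UNIV. \<bar>m x $ a - mu x $ a\<bar>))"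
      using dif_int by auto
    show "AE x in PX. \<bar>fmin C (mu x) - fmin C (y x)\<bar> \<le> 4 * real CARD('p) * Bp * (\<Sum>a\<in>UNIV. \<bar>m x $ a - mu x $ a\<bar>)"
      using Xset(2)
    proof eventually_elim
      case (elim x)
      have "\<bar>fmin C (mu x) - fmin C (y x)\<bar> \<le> 4 * real CARD('p) * Bp * norm (mu x - y x)"
        by (rule fmin_lip[OF cb_props(1,2,4)[OF C]]) (use mu_bound[OF elim] y_bound in auto)
      also have "norm (mu x - y x) \<le> (\<Sum>a\<in>UNIV. \<bar>(mu x - y x) $ a\<bar>)" by (rule norm_le_l1_cart)
      also have "\<dots> = (\<Sum>a\<in>UNIV. \<bar>m x $ a - mu x $ a\<bar>)"
        unfolding y_def using elim by (simp add: abs_minus_commute)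
      finally show ?case using Bp_pos by (simp add: mult_left_mono)
    qed
  qed
  also have "\<dots> = 4 * real CARD('p) * Bp * Lsum"
    unfolding Lsum_def L1norm_def using dif_int by (simp add: Bochner_Integration.integral_sum)
  finally show ?thesis .
qed


lemma emp_eq:
  assumes C: "C \<in> codebooks mu Xset k" and xs: "\<forall>t<n. xs t \<in> Xset"
  shows "emp_risk n m xs C = (1 / real n) * (\<Sum>t<n. fmin C (y (xs t)))"
  unfolding emp_risk_def
proof (intro arg_cong[where f="\<lambda>z. (1 / real n) * z"] sum.cong refl)
  fix t assume "t \<in> {..<n}"
  hence "y (xs t) = m (xs t)" using xs unfolding y_def by auto
  thus "(norm (m (xs t) - proj C (m (xs t))))^2 = fmin C (y (xs t))"
    using proj_eq[OF cb_props(1,2)[OF C]] by simp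
qed

definition gS :: "unit \<Rightarrow> real^'d \<Rightarrow> real" where "gS i z = - fmin Cstar (y z)"
definition S where "S xs = (MAX i\<in>{()}. (1/real n) * (\<Sum>t<n. (\<integral>z. gS i z \<partial>PX) - gS i (xs t)))"

lemma gS_meas: "gS i \<in> borel_measurable PX"
  unfolding gS_def using fmin_meas[OF cb_props(1)[OF Cstar_cb] y_meas] by measurable

lemma gS_bound: "\<bar>gS i z\<bar> \<le> bzc (real CARD('p)) Bp"
  unfolding gS_def bzc_def
  using fmin_le[OF cb_props(1,2,4)[OF Cstar_cb] y_bound] fmin_nonneg[OF cb_props(1,2)[OF Cstar_cb]]
  by (simp add: power_mult_distrib)

lemma S_int: "integrable (PiM {..<n} (\<lambda>_. PX)) S"
  unfolding S_def[abs_def]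
  by (rule maxineq(1)[OF PX(1) _ _ n C.bzc_pos gS_meas gS_bound]) auto

lemma S_le: "(\<integral>xs. S xs \<partial>PiM {..<n} (\<lambda>_. PX)) \<le> bzc (real CARD('p)) Bp / sqrt n"
  using maxineq(2)[OF PX(1) _ _ n C.bzc_pos gS_meas gS_bound, of "{()}"] unfolding S_def by simp

lemma S_val: "S xs = (1 / real n) * (\<Sum>t<n. fmin Cstar (y (xs t))) - (\<integral>z. fmin Cstar (y z) \<partial>PX)"
proof -
  have "S xs = (1/real n) * (\<Sum>t<n. fmin Cstar (y (xs t)) - (\<integral>z. fmin Cstar (y z) \<partial>PX))"
    unfolding S_def gS_def by (simp add: Bochner_Integration.integral_minus)
  also have "\<dots> = (1/real n) * (\<Sum>t<n. fmin Cstar (y (xs t))) - (\<integral>z. fmin Cstar (y z) \<partial>PX)"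
    using n by (simp add: sum_subtractf right_diff_distrib)
  finally show ?thesis .
qed

lemma pointwise:
  assumes xs: "xs \<in> space (PiM {..<n} (\<lambda>_. PX))" and xsX: "\<forall>t<n. xs t \<in> Xset"
  shows "clust_risk PX mu (Chat n \<omega> xs) - clust_risk PX mu Cstar
           \<le> C.W n xs + S xs + 8 * real CARD('p) * Bp * Lsum"
proof -
  define Ch where "Ch = Chat n \<omega> xs"
  have Cb: "Ch \<in> codebooks mu Xset k"
    and mn: "emp_risk n m xs Ch \<le> emp_risk n m xs Cstar"
    using Chat_min[OF \<omega> xs] Cstar_cb unfolding Ch_def m_def by auto
  obtain e where e: "bij_betw e {0..<card Ch} Ch" using ex_bij_betw_nat_finite[OF cb_props(1)[OF Cb]] by blast
  have eC: "e ` {..<k} = Ch" using e cb_props(3)[OF Cb] by (simp add: bij_betw_def atLeast0LessThan)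
  have ebox: "e \<in> C.box"
    unfolding C.box_def using eC cb_props(4)[OF Cb] by auto
  have Fe: "C.F e = (\<lambda>x. fmin Ch (y x))" unfolding C.F_def[abs_def] eC by simp
  have D1: "C.D n (C.F e) xs = (\<integral>z. fmin Ch (y z) \<partial>PX) - (1 / real n) * (\<Sum>t<n. fmin Ch (y (xs t)))"
    unfolding C.D_def Fe using n by (simp add: sum_subtractf right_diff_distrib)
  have ch: "C.D n (C.F e) xs \<le> C.W n xs" by (rule C.chain_ineq[OF ebox n])
  have r1: "\<bar>clust_risk PX mu Ch - (\<integral>x. fmin Ch (y x) \<partial>PX)\<bar> \<le> 4 * real CARD('p) * Bp * Lsum"
    by (rule Rt_close[OF Cb])
  have r2: "\<bar>clust_risk PX mu Cstar - (\<integral>x. fmin Cstar (y x) \<partial>PX)\<bar> \<le> 4 * real CARD('p) * Bp * Lsum"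
    by (rule Rt_close[OF Cstar_cb])
  have e1: "emp_risk n m xs Ch = (1 / real n) * (\<Sum>t<n. fmin Ch (y (xs t)))" by (rule emp_eq[OF Cb xsX])
  have e2: "emp_risk n m xs Cstar = (1 / real n) * (\<Sum>t<n. fmin Cstar (y (xs t)))" by (rule emp_eq[OF Cstar_cb xsX])
  show ?thesis unfolding Ch_def[symmetric]
    using D1 ch r1 r2 e1 e2 mn S_val[of xs] by (simp add: abs_le_iff)
qed

lemma excess_meas: "(\<lambda>xs. clust_risk PX mu (Chat n \<omega> xs) - clust_risk PX mu Cstar) \<in> borel_measurable (PiM {..<n} (\<lambda>_. PX))"
  using measurable_Pair2[OF Chat_meas[of n] \<omega>] by simp

lemma excess_nonneg: "xs \<in> space (PiM {..<n} (\<lambda>_. PX)) \<Longrightarrow> 0 \<le> clust_risk PX mu (Chat n \<omega> xs) - clust_risk PX mu Cstar"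
  using Chat_min[OF \<omega>] opt by auto

lemma excess_int: "integrable (PiM {..<n} (\<lambda>_. PX)) (\<lambda>xs. clust_risk PX mu (Chat n \<omega> xs) - clust_risk PX mu Cstar)"
proof (rule Pn.integrable_const_bound[where B="(2 * real CARD('p) * Bp)^2"])
  show "AE xs in PiM {..<n} (\<lambda>_. PX). norm (clust_risk PX mu (Chat n \<omega> xs) - clust_risk PX mu Cstar) \<le> (2 * real CARD('p) * Bp)^2"
  proof (rule AE_I2)
    fix xs assume xs: "xs \<in> space (PiM {..<n} (\<lambda>_. PX))"
    have cb: "Chat n \<omega> xs \<in> codebooks mu Xset k" using Chat_min[OF \<omega> xs] by auto
    show "norm (clust_risk PX mu (Chat n \<omega> xs) - clust_risk PX mu Cstar) \<le> (2 * real CARD('p) * Bp)^2"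
      using R_bounds[OF cb] R_bounds[OF Cstar_cb] by (simp add: abs_le_iff)
  qed
qed (rule excess_meas)

lemma AE_Xset: "AE xs in PiM {..<n} (\<lambda>_. PX). \<forall>t\<in>{..<n}. xs t \<in> Xset"
  by (intro AE_finite_allI AE_PiM_component[where P="\<lambda>x. x \<in> Xset"] Xset(2) PX(1)) auto

lemma excess_le:
  "(\<integral>xs. clust_risk PX mu (Chat n \<omega> xs) - clust_risk PX mu Cstar \<partial>PiM {..<n} (\<lambda>_. PX))
     \<le> (Kc (real CARD('p)) k Bp + bzc (real CARD('p)) Bp) / sqrt n + 8 * real CARD('p) * Bp * Lsum"
proof -
  have "(\<integral>xs. clust_risk PX mu (Chat n \<omega> xs) - clust_risk PX mu Cstar \<partial>PiM {..<n} (\<lambda>_. PX))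
      \<le> (\<integral>xs. C.W n xs + S xs + 8 * real CARD('p) * Bp * Lsum \<partial>PiM {..<n} (\<lambda>_. PX))"
  proof (intro integral_mono_AE excess_int)
    show "integrable (PiM {..<n} (\<lambda>_. PX)) (\<lambda>xs. C.W n xs + S xs + 8 * real CARD('p) * Bp * Lsum)"
      by (intro Bochner_Integration.integrable_add C.W_int n S_int Pn.integrable_const)
    show "AE xs in PiM {..<n} (\<lambda>_. PX). clust_risk PX mu (Chat n \<omega> xs) - clust_risk PX mu Cstar
            \<le> C.W n xs + S xs + 8 * real CARD('p) * Bp * Lsum"
      using AE_Xset AE_space by eventually_elim (intro pointwise, auto)
  qed
  also have "\<dots> = (\<integral>xs. C.W n xs \<partial>PiM {..<n} (\<lambda>_. PX)) + (\<integral>xs. S xs \<partial>PiM {..<n} (\<lambda>_. PX))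
      + 8 * real CARD('p) * Bp * Lsum"
    by (simp add: Bochner_Integration.integral_add C.W_int n S_int Pn.prob_space)
  also have "\<dots> \<le> Kc (real CARD('p)) k Bp / sqrt n + bzc (real CARD('p)) Bp / sqrt n + 8 * real CARD('p) * Bp * Lsum"
    by (intro add_mono C.W_le n S_le order.refl)
  finally show ?thesis by (simp add: add_divide_distrib)
qed

lemma Xset_ne: "Xset \<noteq> {}"
proof
  assume "Xset = {}"
  with Xset(2) have "AE x in PX. False" by simp
  thus False by (simp add: PX.AE_False)
qed

definition L where "L a = L1norm PX (\<lambda>x. m x $ a - mu x $ a)" for a
definition sp where "sp a = supnorm Xset (\<lambda>x. m x $ a - mu x $ a)" for a

lemma L_nonneg: "0 \<le> L a" unfolding L_def L1norm_def by (intro integral_nonneg_AE AE_I2) auto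

lemma sp_nonneg: "0 \<le> sp a"
proof -
  obtain x0 where x0: "x0 \<in> Xset" using Xset_ne by auto
  have bdd: "bdd_above ((\<lambda>x. \<bar>m x $ a - mu x $ a\<bar>) ` Xset)"
  proof (rule bdd_aboveI2)
    fix x assume "x \<in> Xset"
    hence "\<bar>m x $ a\<bar> \<le> Bp" "\<bar>mu x $ a\<bar> \<le> Bp" using m_bound mu_bound by auto
    thus "\<bar>m x $ a - mu x $ a\<bar> \<le> 2 * Bp" by (auto simp: abs_le_iff)
  qed
  have "\<bar>m x0 $ a - mu x0 $ a\<bar> \<le> sp a" unfolding sp_def supnorm_def
    by (rule cSUP_upper[OF x0 bdd])
  thus ?thesis by (meson abs_ge_zero order.trans)
qed

lemma rem_ge: "(MAX a. L a) \<le> rem_R1 PX Xset mu m \<kappa> \<alpha>"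
proof -
  have \<kappa>: "\<kappa> > 0" using margin unfolding margin_condition_def by auto
  have "0 \<le> sp undefined * L undefined" using sp_nonneg L_nonneg by simp
  also have "\<dots> \<le> (MAX a. sp a * L a)" by (intro Max_ge) auto
  finally have "0 \<le> (1 / \<kappa>) * (MAX a. sp a * L a)" using \<kappa> by simp
  moreover have "0 \<le> (MAX a. sp a) powr (\<alpha> + 1)" by simp
  ultimately show ?thesis unfolding rem_R1_def L_def[symmetric] sp_def[symmetric] by linarith
qed

lemma Lsum_le: "Lsum \<le> real CARD('p) * rem_R1 PX Xset mu m \<kappa> \<alpha>"
proof -
  have "Lsum = (\<Sum>a\<in>UNIV. L a)" unfolding Lsum_def L_def ..
  also have "\<dots> \<le> of_nat (card (UNIV :: 'p set)) * (MAX a. L a)"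
    by (intro sum_bounded_above Max_ge) auto
  also have "\<dots> \<le> real CARD('p) * rem_R1 PX Xset mu m \<kappa> \<alpha>"
    using rem_ge by (intro mult_left_mono) auto
  finally show ?thesis .
qed

lemma rem_nonneg: "0 \<le> rem_R1 PX Xset mu m \<kappa> \<alpha>"
proof -
  have "0 \<le> L undefined" by (rule L_nonneg)
  also have "\<dots> \<le> (MAX a. L a)" by (intro Max_ge) auto
  finally show ?thesis using rem_ge by linarith
qed

definition cc :: real where
  "cc = Kc (real CARD('p)) k Bp + bzc (real CARD('p)) Bp + 8 * real CARD('p)^2 * Bp"

lemma claim1_om:
  "(\<integral>xs. clust_risk PX mu (Chat n \<omega> xs) - clust_risk PX mu Cstar \<partial>PiM {..<n} (\<lambda>_. PX))
     \<le> cc * (1 / sqrt (real n) + rem_R1 PX Xset mu (muhat n \<omega>) \<kappa> \<alpha>)"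
proof -
  have K0: "0 \<le> Kc (real CARD('p)) k Bp" unfolding Kc_def by simp
  have B0: "0 \<le> bzc (real CARD('p)) Bp" unfolding bzc_def by simp
  have "8 * real CARD('p) * Bp * Lsum \<le> 8 * real CARD('p) * Bp * (real CARD('p) * rem_R1 PX Xset mu m \<kappa> \<alpha>)"
    using Lsum_le Bp_pos by (intro mult_left_mono) auto
  also have "\<dots> = (8 * real CARD('p)^2 * Bp) * rem_R1 PX Xset mu m \<kappa> \<alpha>" by (simp add: power2_eq_square)
  also have "\<dots> \<le> cc * rem_R1 PX Xset mu m \<kappa> \<alpha>"
    unfolding cc_def using rem_nonneg K0 B0 by (intro mult_right_mono) auto
  finally have 1: "8 * real CARD('p) * Bp * Lsum \<le> cc * rem_R1 PX Xset mu m \<kappa> \<alpha>" .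
  have "(Kc (real CARD('p)) k Bp + bzc (real CARD('p)) Bp) / sqrt n \<le> cc * (1 / sqrt n)"
    unfolding cc_def using Bp_pos by (simp add: divide_right_mono)
  with excess_le 1 show ?thesis unfolding m_def by (simp add: distrib_left)
qed

end

context thmctx
begin

interpretation PX: prob_space PX by (rule PX(1))
interpretation Q: prob_space Q by (rule Q)

definition ccc :: real where
  "ccc = Kc (real CARD('p)) k Bp + bzc (real CARD('p)) Bp + 8 * real CARD('p)^2 * Bp"

lemma ccc_pos: "ccc > 0"
proof -
  have "0 \<le> Kc (real CARD('p)) k Bp" unfolding Kc_def by simp
  moreover have "0 \<le> bzc (real CARD('p)) Bp" unfolding bzc_def by simp
  moreover have "0 < 8 * real CARD('p)^2 * Bp" using Bp_pos by simp
  ultimately show ?thesis unfolding ccc_def by linarith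
qed

lemma om_I: "n > 0 \<Longrightarrow> \<omega> \<in> space Q \<Longrightarrow> \<forall>a. \<forall>x\<in>Xset. \<bar>muhat n \<omega> x $ a\<bar> \<le> B \<Longrightarrow>
   om PX Xset mu Q muhat Chat Cstar k \<kappa> \<alpha> B n \<omega>"
  unfolding om_def om_axioms_def using thmctx_axioms by auto

lemma claim1:
  "\<exists>c N. \<forall>n\<ge>N. AE \<omega> in Q.
            (\<integral>xs. clust_risk PX mu (Chat n \<omega> xs) - clust_risk PX mu Cstar \<partial>(PiM {..<n} (\<lambda>_. PX)))
              \<le> c * (1 / sqrt (real n) + rem_R1 PX Xset mu (muhat n \<omega>) \<kappa> \<alpha>)"
proof (intro exI allI impI)
  fix n :: nat assume n: "n \<ge> 1"
  show "AE \<omega> in Q.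
            (\<integral>xs. clust_risk PX mu (Chat n \<omega> xs) - clust_risk PX mu Cstar \<partial>(PiM {..<n} (\<lambda>_. PX)))
              \<le> ccc * (1 / sqrt (real n) + rem_R1 PX Xset mu (muhat n \<omega>) \<kappa> \<alpha>)"
    using A1_muhat[of n] AE_space
  proof eventually_elim
    case (elim \<omega>)
    interpret O: om PX Xset mu Q muhat Chat Cstar k \<kappa> \<alpha> B n \<omega>
      by (rule om_I) (use n elim in auto)
    show ?case using O.claim1_om unfolding O.cc_def ccc_def .
  qed
qed

end


context thmctx
begin

interpretation PX: prob_space PX by (rule PX(1))
interpretation Q: prob_space Q by (rule Q)

lemma claim2:
  "\<forall>\<epsilon>>0. \<exists>M N. \<forall>n\<ge>N.
            measure (Q \<Otimes>\<^sub>M PiM {..<n} (\<lambda>_. PX))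
              {z \<in> space (Q \<Otimes>\<^sub>M PiM {..<n} (\<lambda>_. PX)).
                 \<bar>clust_risk PX mu (Chat n (fst z) (snd z)) - clust_risk PX mu Cstar\<bar>
                   > M * (sqrt (ln (real n) / real n) + rem_R1 PX Xset mu (muhat n (fst z)) \<kappa> \<alpha>)}
              \<le> \<epsilon>"
proof (intro allI impI)
  fix \<epsilon> :: real assume \<epsilon>: "\<epsilon> > 0"
  define M where "M = ccc / \<epsilon>"
  have M: "M > 0" unfolding M_def using ccc_pos \<epsilon> by simp
  show "\<exists>M N. \<forall>n\<ge>N.
            measure (Q \<Otimes>\<^sub>M PiM {..<n} (\<lambda>_. PX))
              {z \<in> space (Q \<Otimes>\<^sub>M PiM {..<n} (\<lambda>_. PX)).
                 \<bar>clust_risk PX mu (Chat n (fst z) (snd z)) - clust_risk PX mu Cstar\<bar>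
                   > M * (sqrt (ln (real n) / real n) + rem_R1 PX Xset mu (muhat n (fst z)) \<kappa> \<alpha>)}
              \<le> \<epsilon>"
  proof (intro exI allI impI)
    fix n :: nat assume n3: "3 \<le> n"
    have n: "n > 0" using n3 by simp
    interpret Pn: prob_space "PiM {..<n} (\<lambda>_. PX)" by (intro prob_space_PiM) (simp add: PX(1))
    interpret QP: prob_space "Q \<Otimes>\<^sub>M PiM {..<n} (\<lambda>_. PX)"
      by (intro prob_space_pair Q Pn.prob_space_axioms)
    have ln1: "1 \<le> ln (real n)"
    proof -
      have "exp 1 \<le> real n" using exp_le n3 by linarith
      hence "ln (exp 1) \<le> ln (real n)" using n by (subst ln_le_cancel_iff) auto
      thus ?thesis by simp
    qed
    define T where "T = sqrt (ln (real n) / real n)"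
    have T: "1 / sqrt (real n) \<le> T"
    proof -
      have "1 / real n \<le> ln (real n) / real n" using ln1 n by (intro divide_right_mono) auto
      hence "sqrt (1 / real n) \<le> T" unfolding T_def by (rule real_sqrt_le_mono)
      thus ?thesis by (simp add: real_sqrt_divide)
    qed
    have "0 < ln (real n) / real n" using ln1 n n3 by (intro divide_pos_pos) auto
    hence Tpos: "T > 0" unfolding T_def by simp
    define S where "S = {z \<in> space (Q \<Otimes>\<^sub>M PiM {..<n} (\<lambda>_. PX)).
                 \<bar>clust_risk PX mu (Chat n (fst z) (snd z)) - clust_risk PX mu Cstar\<bar>
                   > M * (sqrt (ln (real n) / real n) + rem_R1 PX Xset mu (muhat n (fst z)) \<kappa> \<alpha>)}"
    show "measure (Q \<Otimes>\<^sub>M PiM {..<n} (\<lambda>_. PX)) S \<le> \<epsilon>"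
    proof (cases "S \<in> sets (Q \<Otimes>\<^sub>M PiM {..<n} (\<lambda>_. PX))")
      case False
      thus ?thesis using \<epsilon> by (simp add: measure_notin_sets)
    next
      case True
      have "emeasure (Q \<Otimes>\<^sub>M PiM {..<n} (\<lambda>_. PX)) S = (\<integral>\<^sup>+\<omega>. emeasure (PiM {..<n} (\<lambda>_. PX)) (Pair \<omega> -` S) \<partial>Q)"
        by (rule Pn.emeasure_pair_measure_alt[OF True])
      also have "\<dots> \<le> (\<integral>\<^sup>+\<omega>. ennreal \<epsilon> \<partial>Q)"
      proof (rule nn_integral_mono_AE)
        show "AE \<omega> in Q. emeasure (PiM {..<n} (\<lambda>_. PX)) (Pair \<omega> -` S) \<le> ennreal \<epsilon>"
          using A1_muhat[of n] AE_space
        proof eventually_elim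
          case (elim \<omega>)
          interpret O: om PX Xset mu Q muhat Chat Cstar k \<kappa> \<alpha> B n \<omega>
            by (rule om_I) (use n elim in auto)
          define r where "r = rem_R1 PX Xset mu (muhat n \<omega>) \<kappa> \<alpha>"
          have r: "0 \<le> r" unfolding r_def using O.rem_nonneg unfolding O.m_def .
          define a where "a = M * (T + r)"
          have a: "a > 0" unfolding a_def using M Tpos r by simp
          define u where "u xs = clust_risk PX mu (Chat n \<omega> xs) - clust_risk PX mu Cstar" for xs
          have um: "u \<in> borel_measurable (PiM {..<n} (\<lambda>_. PX))" unfolding u_def[abs_def] by (rule O.excess_meas)
          have sub: "Pair \<omega> -` S \<subseteq> {xs \<in> space (PiM {..<n} (\<lambda>_. PX)). a \<le> u xs}"
          proof
            fix xs assume "xs \<in> Pair \<omega> -` S"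
            hence xs: "xs \<in> space (PiM {..<n} (\<lambda>_. PX))" and
              gt: "\<bar>u xs\<bar> > M * (T + r)"
              unfolding S_def T_def r_def u_def by (auto simp: space_pair_measure)
            have "0 \<le> u xs" unfolding u_def by (rule O.excess_nonneg[OF xs])
            thus "xs \<in> {xs \<in> space (PiM {..<n} (\<lambda>_. PX)). a \<le> u xs}" using xs gt unfolding a_def by auto
          qed
          have setm: "{xs \<in> space (PiM {..<n} (\<lambda>_. PX)). a \<le> u xs} \<in> sets (PiM {..<n} (\<lambda>_. PX))"
            using um by measurable
          have "measure (PiM {..<n} (\<lambda>_. PX)) {xs \<in> space (PiM {..<n} (\<lambda>_. PX)). a \<le> u xs}
                \<le> (\<integral>xs. u xs \<partial>PiM {..<n} (\<lambda>_. PX)) / a"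
            by (rule integral_Markov_inequality_measure[OF _ sets.top _ a])
               (use O.excess_int O.excess_nonneg in \<open>auto simp: u_def intro!: AE_I2\<close>)
          also have "(\<integral>xs. u xs \<partial>PiM {..<n} (\<lambda>_. PX)) \<le> ccc * (1 / sqrt (real n) + r)"
            using O.claim1_om unfolding u_def O.cc_def ccc_def r_def .
          also have "\<dots> \<le> ccc * (T + r)"
            using T ccc_pos by (intro mult_left_mono) auto
          hence "ccc * (1 / sqrt (real n) + r) / a \<le> ccc * (T + r) / a" using a by (intro divide_right_mono) auto
          also have "ccc * (T + r) / a = \<epsilon>"
          proof -
            have X: "ccc * (T + r) > 0" using Tpos r ccc_pos by simp
            have "a = ccc * (T + r) / \<epsilon>" unfolding a_def M_def by simp
            thus ?thesis using X \<epsilon> Tpos r ccc_pos by simp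
          qed
          finally have mk: "measure (PiM {..<n} (\<lambda>_. PX)) {xs \<in> space (PiM {..<n} (\<lambda>_. PX)). a \<le> u xs} \<le> \<epsilon>"
            using a by (simp add: divide_right_mono)
          have "emeasure (PiM {..<n} (\<lambda>_. PX)) (Pair \<omega> -` S) \<le> emeasure (PiM {..<n} (\<lambda>_. PX)) {xs \<in> space (PiM {..<n} (\<lambda>_. PX)). a \<le> u xs}"
            by (rule emeasure_mono[OF sub setm])
          also have "\<dots> = ennreal (measure (PiM {..<n} (\<lambda>_. PX)) {xs \<in> space (PiM {..<n} (\<lambda>_. PX)). a \<le> u xs})"
            by (simp add: Pn.emeasure_eq_measure)
          also have "\<dots> \<le> ennreal \<epsilon>" using mk by (rule ennreal_leI)
          finally show ?case .
        qed
      qed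
      also have "\<dots> = ennreal \<epsilon>" by (simp add: Q.emeasure_space_1)
      finally have "ennreal (measure (Q \<Otimes>\<^sub>M PiM {..<n} (\<lambda>_. PX)) S) \<le> ennreal \<epsilon>"
        by (simp add: QP.emeasure_eq_measure)
      thus ?thesis using \<epsilon> by (simp add: ennreal_le_iff)
    qed
  qed
qed

end


theorem theorem1:
  fixes PX :: "(real^'d) measure" and Xset :: "(real^'d) set"
    and mu :: "real^'d \<Rightarrow> real^'p"
    and Q :: "'w measure"
    and muhat :: "nat \<Rightarrow> 'w \<Rightarrow> real^'d \<Rightarrow> real^'p"
    and Chat :: "nat \<Rightarrow> 'w \<Rightarrow> (nat \<Rightarrow> real^'d) \<Rightarrow> (real^'p) set"
    and Cstar :: "(real^'p) set"
    and k :: nat and \<kappa> \<alpha> B :: real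
  assumes PX: "prob_space PX" "sets PX = sets borel"
    and Xset: "Xset \<in> sets borel" "AE x in PX. x \<in> Xset"
    and Q: "prob_space Q"
    and mu_meas: "mu \<in> borel_measurable PX"
    and muhat_meas: "\<And>n. (\<lambda>(\<omega>, x). muhat n \<omega> x) \<in> borel_measurable (Q \<Otimes>\<^sub>M PX)"
    and sup_meas: "\<And>n a. (\<lambda>\<omega>. supnorm Xset (\<lambda>x. muhat n \<omega> x $ a - mu x $ a)) \<in> borel_measurable Q"
    and k: "k \<ge> 1"
    and Chat_min: "\<And>n \<omega> xs. \<omega> \<in> space Q \<Longrightarrow> xs \<in> space (PiM {..<n} (\<lambda>_. PX)) \<Longrightarrow>
        Chat n \<omega> xs \<in> codebooks mu Xset k \<and>
        (\<forall>C\<in>codebooks mu Xset k. emp_risk n (muhat n \<omega>) xs (Chat n \<omega> xs) \<le> emp_risk n (muhat n \<omega>) xs C)"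
    and Chat_meas: "\<And>n. (\<lambda>(\<omega>, xs). clust_risk PX mu (Chat n \<omega> xs))
        \<in> borel_measurable (Q \<Otimes>\<^sub>M PiM {..<n} (\<lambda>_. PX))"
    and Cstar: "Cstar \<in> optimal_codebooks PX mu Xset k"
    and margin: "margin_condition PX mu Xset k \<kappa> \<alpha>"
    and A1_mu: "\<And>a x. x \<in> Xset \<Longrightarrow> \<bar>mu x $ a\<bar> \<le> B"
    and A1_muhat: "\<And>n. AE \<omega> in Q. \<forall>a. \<forall>x\<in>Xset. \<bar>muhat n \<omega> x $ a\<bar> \<le> B"
    and A2: "\<And>\<epsilon>. \<epsilon> > 0 \<Longrightarrow>
        (\<lambda>n. measure Q {\<omega> \<in> space Q. (MAX a. supnorm Xset (\<lambda>x. muhat n \<omega> x $ a - mu x $ a)) > \<epsilon>})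
          \<longlonglongrightarrow> 0"
  shows "(\<exists>c N. \<forall>n\<ge>N. AE \<omega> in Q.
            (\<integral>xs. clust_risk PX mu (Chat n \<omega> xs) - clust_risk PX mu Cstar \<partial>(PiM {..<n} (\<lambda>_. PX)))
              \<le> c * (1 / sqrt (real n) + rem_R1 PX Xset mu (muhat n \<omega>) \<kappa> \<alpha>))
       \<and> (\<forall>\<epsilon>>0. \<exists>M N. \<forall>n\<ge>N.
            measure (Q \<Otimes>\<^sub>M PiM {..<n} (\<lambda>_. PX))
              {z \<in> space (Q \<Otimes>\<^sub>M PiM {..<n} (\<lambda>_. PX)).
                 \<bar>clust_risk PX mu (Chat n (fst z) (snd z)) - clust_risk PX mu Cstar\<bar>
                   > M * (sqrt (ln (real n) / real n) + rem_R1 PX Xset mu (muhat n (fst z)) \<kappa> \<alpha>)}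
              \<le> \<epsilon>)"
proof -
  have ctx: "thmctx PX Xset mu Q muhat Chat Cstar k \<kappa> \<alpha> B"
    using PX Xset Q mu_meas muhat_meas sup_meas k Chat_min Chat_meas Cstar margin A1_mu A1_muhat
    by (intro thmctx.intro) auto
  show ?thesis using thmctx.claim1[OF ctx] thmctx.claim2[OF ctx] by blast
qed

end
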